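(* Let $A,M\in\mathbb{C}^{n\times n}$ be Hermitian positive definite. Let $V_r=[\bm v_{r,1},\dots,\bm v_{r,n}]$ be an invertible matrix with $AV_r=MV_r\Lambda$, $\Lambda=\mathrm{diag}(\lambda_1,\dots,\lambda_n)$, such that $V_r^*AV_r$ and $V_r^*MV_r$ are diagonal, with $|1-\lambda_1|\ge\cdots\ge|1-\lambda_n|\ge0$. Fix $n_c\in\{1,\dots,n\}$ and let $P_\sharp\in\mathbb{C}^{n\times n_c}$ satisfy $\mathrm{range}(P_\sharp)=\mathrm{span}\{\bm v_{r,1},\dots,\bm v_{r,n_c}\}$. Then for all integers $\nu_1,\nu_2\ge0$, $$P_\sharp\in\operatorname*{argmin}_{P\in\mathbb{C}^{n\times n_c}}\|E_{\rm TG}^{\nu_1,\nu_2}(P,P)\|_A\quad\text{and}\quad P_\sharp\in\operatorname*{argmin}_{P\in\mathbb{C}^{n\times n_c}}\|E_{\rm TG}^{\nu_1,\nu_2}(P,P)\|_M$$ (minima over $P$ with $P^*AP$ invertible), and, if $n_c<n$, $$\|E_{\rm TG}^{\nu_1,\nu_2}(P_\sharp,P_\sharp)\|_A=\|E_{\rm TG}^{\nu_1,\nu_2}(P_\sharp,P_\sharp)\|_M=|1-\lambda_{n_c+1}|^{\nu_1+\nu_2}.$$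
   Context: For $P,R\in\mathbb{C}^{n\times n_c}$ with $R^*AP$ invertible, $\Pi(P,R)=P(R^*AP)^{-1}R^*A$ and $E_{\rm TG}^{\nu_1,\nu_2}(P,R)=(I-M^{-1}A)^{\nu_2}(I-\Pi(P,R))(I-M^{-1}A)^{\nu_1}$. For Hermitian positive definite $S$, $\|x\|_S=(x^*Sx)^{1/2}$ and $\|Z\|_S=\max_{x\ne0}\|Zx\|_S/\|x\|_S$. *)

theory Defs
  imports Complex_Main "Jordan_Normal_Form.Schur_Decomposition"
begin

definition qform :: "complex mat \<Rightarrow> complex vec \<Rightarrow> complex" where
  "qform S x = conjugate x \<bullet> (S *\<^sub>v x)"

definition hermitian_pd :: "nat \<Rightarrow> complex mat \<Rightarrow> bool" where
  "hermitian_pd n S \<longleftrightarrow> S \<in> carrier_mat n n \<and> mat_adjoint S = S \<and>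
     (\<forall>x \<in> carrier_vec n. x \<noteq> 0\<^sub>v n \<longrightarrow> Re (qform S x) > 0)"

definition mat_inv :: "complex mat \<Rightarrow> complex mat" where
  "mat_inv B = (SOME C. inverts_mat B C \<and> inverts_mat C B)"

definition Pi_proj :: "complex mat \<Rightarrow> complex mat \<Rightarrow> complex mat \<Rightarrow> complex mat" where
  "Pi_proj A P R = P * mat_inv (mat_adjoint R * A * P) * mat_adjoint R * A"

definition E_TG :: "nat \<Rightarrow> complex mat \<Rightarrow> complex mat \<Rightarrow> nat \<Rightarrow> nat \<Rightarrow> complex mat \<Rightarrow> complex mat \<Rightarrow> complex mat" where
  "E_TG n A M nu1 nu2 P R =
     (1\<^sub>m n - mat_inv M * A) ^\<^sub>m nu2 * (1\<^sub>m n - Pi_proj A P R) * (1\<^sub>m n - mat_inv M * A) ^\<^sub>m nu1"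

definition vnorm_S :: "complex mat \<Rightarrow> complex vec \<Rightarrow> real" where
  "vnorm_S S x = sqrt (Re (qform S x))"

definition mnorm_S :: "nat \<Rightarrow> complex mat \<Rightarrow> complex mat \<Rightarrow> real" where
  "mnorm_S n S Z = Sup {vnorm_S S (Z *\<^sub>v x) / vnorm_S S x | x. x \<in> carrier_vec n \<and> x \<noteq> 0\<^sub>v n}"

end

theory Submission
  imports Defs
begin


lemma adj_carrier: "P \<in> carrier_mat n k \<Longrightarrow> mat_adjoint P \<in> carrier_mat k n"
  unfolding mat_adjoint_def by auto

lemma adj_index: "P \<in> carrier_mat n k \<Longrightarrow> i < k \<Longrightarrow> j < n \<Longrightarrow> mat_adjoint P $$ (i,j) = cnj (P $$ (j,i))"
  unfolding mat_adjoint_def by (auto simp: mat_of_rows_def)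

lemma adj_sprod:
  fixes P :: "complex mat" assumes P: "P \<in> carrier_mat n k" and y: "y \<in> carrier_vec k" and u: "u \<in> carrier_vec n"
  shows "conjugate (P *\<^sub>v y) \<bullet> u = conjugate y \<bullet> (mat_adjoint P *\<^sub>v u)"
proof -
  have "conjugate (P *\<^sub>v y) \<bullet> u = (\<Sum>i<n. cnj (\<Sum>j<k. P $$ (i,j) * y $ j) * u $ i)"
    using P y u by (auto simp: scalar_prod_def mult_mat_vec_def row_def lessThan_atLeast0 intro!: sum.cong)
  also have "\<dots> = (\<Sum>i<n. \<Sum>j<k. cnj (P $$ (i,j)) * cnj (y $ j) * u $ i)"
    by (simp add: sum_distrib_right)
  also have "\<dots> = (\<Sum>j<k. \<Sum>i<n. cnj (y $ j) * (cnj (P $$ (i,j)) * u $ i))"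
    by (subst sum.swap) (simp add: ac_simps)
  also have "\<dots> = (\<Sum>j<k. cnj (y $ j) * (\<Sum>i<n. mat_adjoint P $$ (j,i) * u $ i))"
    using P by (simp add: sum_distrib_left adj_index)
  also have "\<dots> = conjugate y \<bullet> (mat_adjoint P *\<^sub>v u)"
    using P y u adj_carrier[OF P] by (auto simp: scalar_prod_def mult_mat_vec_def row_def lessThan_atLeast0 intro!: sum.cong)
  finally show ?thesis .
qed

lemma cnj_mult_self: "cnj z * z = complex_of_real ((cmod z)^2)"
  using complex_norm_square[of z] by (metis mult.commute)

lemma sprod_self_zero:
  fixes u :: "complex vec"
  assumes u: "u \<in> carrier_vec n" and z: "conjugate u \<bullet> u = 0"
  shows "u = 0\<^sub>v n"
proof -
  have "conjugate u \<bullet> u = (\<Sum>i<n. complex_of_real ((cmod (u$i))^2))"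
    using u by (auto simp: scalar_prod_def lessThan_atLeast0 cnj_mult_self intro!: sum.cong)
  hence "(\<Sum>i<n. (cmod (u$i))^2) = 0" using z
    by (metis of_real_eq_0_iff of_real_sum)
  hence "\<forall>i\<in>{..<n}. (cmod (u$i))^2 = 0"
    by (subst (asm) sum_nonneg_eq_0_iff) auto
  thus ?thesis using u by (auto intro!: eq_vecI)
qed


lemma inv_props:
  fixes B :: "complex mat"
  assumes B: "B \<in> carrier_mat k k" and inv: "invertible_mat B"
  shows "mat_inv B \<in> carrier_mat k k" "B * mat_inv B = 1\<^sub>m k" "mat_inv B * B = 1\<^sub>m k"
proof -
  from inv obtain C where "inverts_mat B C \<and> inverts_mat C B" unfolding invertible_mat_def by auto
  hence "inverts_mat B (mat_inv B) \<and> inverts_mat (mat_inv B) B"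
    unfolding mat_inv_def by (rule someI)
  hence 1: "B * mat_inv B = 1\<^sub>m k" and 2: "mat_inv B * B = 1\<^sub>m (dim_row (mat_inv B))"
    using B unfolding inverts_mat_def by auto
  have "dim_col (B * mat_inv B) = k" using 1 by simp
  hence c: "dim_col (mat_inv B) = k" by simp
  have "dim_col (mat_inv B * B) = dim_row (mat_inv B)" using 2 by simp
  hence r: "dim_row (mat_inv B) = k" using B by simp
  show "mat_inv B \<in> carrier_mat k k" using r c by auto
  show "B * mat_inv B = 1\<^sub>m k" by fact
  show "mat_inv B * B = 1\<^sub>m k" using 2 r by simp
qed

lemma ker_inv:
  fixes B :: "complex mat"
  assumes B: "B \<in> carrier_mat k k" and ker: "\<And>v. v \<in> carrier_vec k \<Longrightarrow> B *\<^sub>v v = 0\<^sub>v k \<Longrightarrow> v = 0\<^sub>v k"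
  shows "invertible_mat B"
proof -
  have "det B \<noteq> 0" using det_0_iff_vec_prod_zero[OF B] ker by auto
  from det_non_zero_imp_unit[OF B this, of "()"]
  obtain C where C: "C \<in> carrier_mat k k" "C * B = 1\<^sub>m k" "B * C = 1\<^sub>m k"
    unfolding Units_def ring_mat_def by auto
  show ?thesis unfolding invertible_mat_def inverts_mat_def square_mat.simps
    using B C by (intro conjI exI[of _ C]) auto
qed

definition dgm :: "nat \<Rightarrow> (nat \<Rightarrow> complex) \<Rightarrow> complex mat" where
  "dgm k f = mat k k (\<lambda>(i,j). if i = j then f i else 0)"

lemma dgm_carrier[simp]: "dgm k f \<in> carrier_mat k k" unfolding dgm_def by auto

lemma dgm_mult_vec: assumes y: "y \<in> carrier_vec k"
  shows "dgm k f *\<^sub>v y = vec k (\<lambda>i. f i * y$i)"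
proof (rule eq_vecI)
  fix i assume i: "i < dim_vec (vec k (\<lambda>i. f i * y$i))"
  hence i: "i < k" by simp
  have "(dgm k f *\<^sub>v y) $ i = (\<Sum>j\<in>{0..<k}. (if i = j then f i else 0) * y $ j)"
    using i y by (simp add: dgm_def mult_mat_vec_def scalar_prod_def row_def)
  also have "\<dots> = (\<Sum>j\<in>{0..<k}. if i = j then f i * y $ j else 0)"
    by (rule sum.cong) auto
  also have "\<dots> = f i * y $ i" using i by (simp add: sum.delta)
  finally show "(dgm k f *\<^sub>v y) $ i = vec k (\<lambda>i. f i * y$i) $ i" using i by simp
qed (use y in \<open>simp add: dgm_def\<close>)

lemma diag_dgm: assumes D: "D \<in> carrier_mat k k" and d: "diagonal_mat D"
  shows "D = dgm k (\<lambda>i. D $$ (i,i))"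
  using D d unfolding diagonal_mat_def dgm_def by (intro eq_matI) auto



locale cs =
  fixes n nc :: nat and A M V :: "complex mat" and lam :: "nat \<Rightarrow> complex"
  assumes A: "hermitian_pd n A" and M: "hermitian_pd n M"
    and V: "V \<in> carrier_mat n n" and Vinv: "invertible_mat V"
    and eig: "A * V = M * V * mat n n (\<lambda>(i, j). if i = j then lam i else 0)"
    and diagA: "diagonal_mat (mat_adjoint V * A * V)"
    and diagM: "diagonal_mat (mat_adjoint V * M * V)"
    and order: "\<And>i j. i \<le> j \<Longrightarrow> j < n \<Longrightarrow> cmod (1 - lam j) \<le> cmod (1 - lam i)"
    and nc: "1 \<le> nc" "nc \<le> n"
begin

definition "W = mat_inv V"
definition "good X \<longleftrightarrow> hermitian_pd n X \<and> diagonal_mat (mat_adjoint V * X * V)"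
definition "wt X i = Re ((mat_adjoint V * X * V) $$ (i,i))"

lemma goodA: "good A" and goodM: "good M" using A M diagA diagM unfolding good_def by auto

lemma Ac: "A \<in> carrier_mat n n" and Mc: "M \<in> carrier_mat n n"
  using A M unfolding hermitian_pd_def by auto

lemma npos: "0 < n" using nc by auto

lemma W: "W \<in> carrier_mat n n" "V * W = 1\<^sub>m n" "W * V = 1\<^sub>m n"
  using inv_props[OF V Vinv] unfolding W_def by auto

lemma VW_vec: "x \<in> carrier_vec n \<Longrightarrow> V *\<^sub>v (W *\<^sub>v x) = x"
  using W V by (metis assoc_mult_mat_vec one_mult_mat_vec)

lemma WV_vec: "y \<in> carrier_vec n \<Longrightarrow> W *\<^sub>v (V *\<^sub>v y) = y"
  using W V by (metis assoc_mult_mat_vec one_mult_mat_vec)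

lemma V_nz: "y \<in> carrier_vec n \<Longrightarrow> y \<noteq> 0\<^sub>v n \<Longrightarrow> V *\<^sub>v y \<noteq> 0\<^sub>v n"
proof
  assume y: "y \<in> carrier_vec n" "y \<noteq> 0\<^sub>v n" and "V *\<^sub>v y = 0\<^sub>v n"
  hence "W *\<^sub>v (V *\<^sub>v y) = W *\<^sub>v 0\<^sub>v n" by simp
  also have "\<dots> = 0\<^sub>v n" using W by (intro eq_vecI) auto
  finally show False using WV_vec y by simp
qed

lemma form_V:
  assumes X: "X \<in> carrier_mat n n" and d: "diagonal_mat (mat_adjoint V * X * V)"
    and w: "w \<in> carrier_vec n" and b: "b \<in> carrier_vec n"
  shows "conjugate (V *\<^sub>v w) \<bullet> (X *\<^sub>v (V *\<^sub>v b)) =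
     (\<Sum>i<n. cnj (w$i) * ((mat_adjoint V * X * V) $$ (i,i) * b$i))"
proof -
  have adj: "mat_adjoint V \<in> carrier_mat n n" using adj_carrier[OF V] .
  have D: "mat_adjoint V * X * V \<in> carrier_mat n n" using adj X V by auto
  have "conjugate (V *\<^sub>v w) \<bullet> (X *\<^sub>v (V *\<^sub>v b)) = conjugate w \<bullet> (mat_adjoint V *\<^sub>v (X *\<^sub>v (V *\<^sub>v b)))"
    using adj_sprod[OF V w, of "X *\<^sub>v (V *\<^sub>v b)"] X V b by auto
  also have "mat_adjoint V *\<^sub>v (X *\<^sub>v (V *\<^sub>v b)) = (mat_adjoint V * X * V) *\<^sub>v b"
    using adj X V b by (simp add: assoc_mult_mat_vec[of _ n n _ n])
  also have "\<dots> = dgm n (\<lambda>i. (mat_adjoint V * X * V) $$ (i,i)) *\<^sub>v b"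
    using diag_dgm[OF D d] by simp
  also have "\<dots> = vec n (\<lambda>i. (mat_adjoint V * X * V) $$ (i,i) * b$i)"
    using dgm_mult_vec[OF b] .
  also have "conjugate w \<bullet> \<dots> = (\<Sum>i<n. cnj (w$i) * ((mat_adjoint V * X * V) $$ (i,i) * b$i))"
    using w by (simp add: scalar_prod_def lessThan_atLeast0)
  finally show ?thesis .
qed

lemma good_carrier: "good X \<Longrightarrow> X \<in> carrier_mat n n"
  unfolding good_def hermitian_pd_def by auto

lemma qform_V:
  assumes g: "good X" and y: "y \<in> carrier_vec n"
  shows "Re (qform X (V *\<^sub>v y)) = (\<Sum>i<n. wt X i * (cmod (y$i))^2)"
proof -
  have "qform X (V *\<^sub>v y) = (\<Sum>i<n. cnj (y$i) * ((mat_adjoint V * X * V) $$ (i,i) * y$i))"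
    unfolding qform_def using form_V[OF good_carrier[OF g] _ y y] g unfolding good_def by auto
  also have "\<dots> = (\<Sum>i<n. (mat_adjoint V * X * V) $$ (i,i) * complex_of_real ((cmod (y$i))^2))"
    by (rule sum.cong[OF refl]) (metis cnj_mult_self mult.assoc mult.commute)
  finally show ?thesis unfolding wt_def by (simp add: Re_sum)
qed

lemma wt_pos:
  assumes g: "good X" and i: "i < n"
  shows "wt X i > 0"
proof -
  have "Re (qform X (V *\<^sub>v unit_vec n i)) = (\<Sum>j<n. wt X j * (cmod (unit_vec n i $ j))^2)"
    using qform_V[OF g] by simp
  also have "\<dots> = (\<Sum>j<n. if j = i then wt X i else 0)"
    by (rule sum.cong) (auto simp: i)
  also have "\<dots> = wt X i" using i by (simp add: sum.delta')
  finally have e: "Re (qform X (V *\<^sub>v unit_vec n i)) = wt X i" .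
  have "(unit_vec n i :: complex vec) \<noteq> 0\<^sub>v n"
  proof
    assume "(unit_vec n i :: complex vec) = 0\<^sub>v n"
    hence "(unit_vec n i :: complex vec) $ i = 0\<^sub>v n $ i" by (simp only:)
    moreover have "(unit_vec n i :: complex vec) $ i = 1" using i by simp
    moreover have "0\<^sub>v n $ i = (0::complex)" using i by simp
    ultimately show False by simp
  qed
  hence "V *\<^sub>v unit_vec n i \<noteq> 0\<^sub>v n" using V_nz by simp
  moreover have "V *\<^sub>v unit_vec n i \<in> carrier_vec n" using V by simp
  ultimately have "Re (qform X (V *\<^sub>v unit_vec n i)) > 0"
    using g unfolding good_def hermitian_pd_def by blast
  thus ?thesis using e by simp
qed

lemma vnorm_V:
  assumes g: "good X" and y: "y \<in> carrier_vec n"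
  shows "vnorm_S X (V *\<^sub>v y) = sqrt (\<Sum>i<n. wt X i * (cmod (y$i))^2)"
  unfolding vnorm_S_def using qform_V[OF g y] by simp

lemma vnorm_cmp_le:
  assumes g: "good X" and y: "y \<in> carrier_vec n" and h: "h \<in> carrier_vec n" and L: "L \<ge> 0"
    and c: "\<And>i. i < n \<Longrightarrow> cmod (h$i) \<le> L * cmod (y$i)"
  shows "vnorm_S X (V *\<^sub>v h) \<le> L * vnorm_S X (V *\<^sub>v y)"
proof -
  have "(\<Sum>i<n. wt X i * (cmod (h$i))^2) \<le> (\<Sum>i<n. L^2 * (wt X i * (cmod (y$i))^2))"
  proof (rule sum_mono)
    fix i assume "i \<in> {..<n}"
    hence i: "i < n" by simp
    have "(cmod (h$i))^2 \<le> (L * cmod (y$i))^2" using c[OF i] by (intro power_mono) auto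
    thus "wt X i * (cmod (h$i))^2 \<le> L^2 * (wt X i * (cmod (y$i))^2)"
      using wt_pos[OF g i] by (simp add: power_mult_distrib ac_simps)
  qed
  hence "sqrt (\<Sum>i<n. wt X i * (cmod (h$i))^2) \<le> sqrt (L^2 * (\<Sum>i<n. wt X i * (cmod (y$i))^2))"
    by (simp add: sum_distrib_left)
  thus ?thesis using L by (simp add: vnorm_V[OF g y] vnorm_V[OF g h] real_sqrt_mult)
qed

lemma vnorm_cmp_ge:
  assumes g: "good X" and y: "y \<in> carrier_vec n" and h: "h \<in> carrier_vec n" and L: "L \<ge> 0"
    and c: "\<And>i. i < n \<Longrightarrow> cmod (h$i) \<ge> L * cmod (y$i)"
  shows "vnorm_S X (V *\<^sub>v h) \<ge> L * vnorm_S X (V *\<^sub>v y)"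
proof -
  have "(\<Sum>i<n. wt X i * (cmod (h$i))^2) \<ge> (\<Sum>i<n. L^2 * (wt X i * (cmod (y$i))^2))"
  proof (rule sum_mono)
    fix i assume "i \<in> {..<n}"
    hence i: "i < n" by simp
    have "(cmod (h$i))^2 \<ge> (L * cmod (y$i))^2" using c[OF i] L by (intro power_mono) auto
    thus "wt X i * (cmod (h$i))^2 \<ge> L^2 * (wt X i * (cmod (y$i))^2)"
      using wt_pos[OF g i] by (simp add: power_mult_distrib ac_simps)
  qed
  hence "sqrt (\<Sum>i<n. wt X i * (cmod (h$i))^2) \<ge> sqrt (L^2 * (\<Sum>i<n. wt X i * (cmod (y$i))^2))"
    by (simp add: sum_distrib_left)
  thus ?thesis using L by (simp add: vnorm_V[OF g y] vnorm_V[OF g h] real_sqrt_mult)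
qed

lemma vnorm_pos:
  assumes g: "good X" and x: "x \<in> carrier_vec n" and nz: "x \<noteq> 0\<^sub>v n"
  shows "vnorm_S X x > 0"
  using g x nz unfolding good_def hermitian_pd_def vnorm_S_def by auto

end


context cs begin

abbreviation "rset X Z \<equiv> {vnorm_S X (Z *\<^sub>v x) / vnorm_S X x | x. x \<in> carrier_vec n \<and> x \<noteq> 0\<^sub>v n}"

lemma unit0: "(unit_vec n 0 :: complex vec) \<in> carrier_vec n" "(unit_vec n 0 :: complex vec) \<noteq> 0\<^sub>v n"
proof -
  show "(unit_vec n 0 :: complex vec) \<in> carrier_vec n" by simp
  show "(unit_vec n 0 :: complex vec) \<noteq> 0\<^sub>v n"
  proof
    assume "(unit_vec n 0 :: complex vec) = 0\<^sub>v n"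
    hence "(unit_vec n 0 :: complex vec) $ 0 = 0\<^sub>v n $ 0" by (simp only:)
    moreover have "(unit_vec n 0 :: complex vec) $ 0 = 1" using npos by simp
    moreover have "0\<^sub>v n $ 0 = (0::complex)" using npos by simp
    ultimately show False by simp
  qed
qed

lemma mnorm_le:
  assumes g: "good X" and L: "\<forall>y\<in>carrier_vec n. vnorm_S X (Z *\<^sub>v (V *\<^sub>v y)) \<le> L * vnorm_S X (V *\<^sub>v y)"
  shows "mnorm_S n X Z \<le> L" "bdd_above (rset X Z)"
proof -
  have ub: "r \<le> L" if "r \<in> rset X Z" for r
  proof -
    from that obtain x where x: "x \<in> carrier_vec n" "x \<noteq> 0\<^sub>v n" and r: "r = vnorm_S X (Z *\<^sub>v x) / vnorm_S X x" by auto
    have "V *\<^sub>v (W *\<^sub>v x) = x" using VW_vec x by simp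
    moreover have "W *\<^sub>v x \<in> carrier_vec n" using W x by simp
    ultimately have "vnorm_S X (Z *\<^sub>v x) \<le> L * vnorm_S X x" using L by metis
    moreover have "vnorm_S X x > 0" using vnorm_pos[OF g x] .
    ultimately show ?thesis unfolding r by (simp add: pos_divide_le_eq)
  qed
  have "vnorm_S X (Z *\<^sub>v unit_vec n 0) / vnorm_S X (unit_vec n 0) \<in> rset X Z" using unit0 by blast
  hence ne: "rset X Z \<noteq> {}" by auto
  show "mnorm_S n X Z \<le> L" unfolding mnorm_S_def by (rule cSup_least[OF ne]) (use ub in auto)
  show "bdd_above (rset X Z)" using ub by (auto simp: bdd_above_def)
qed

lemma mnorm_ge:
  assumes g: "good X" and b: "bdd_above (rset X Z)" and y: "y \<in> carrier_vec n" "y \<noteq> 0\<^sub>v n"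
    and L: "L * vnorm_S X (V *\<^sub>v y) \<le> vnorm_S X (Z *\<^sub>v (V *\<^sub>v y))"
  shows "L \<le> mnorm_S n X Z"
proof -
  have x: "V *\<^sub>v y \<in> carrier_vec n" "V *\<^sub>v y \<noteq> 0\<^sub>v n" using V y V_nz by auto
  have p: "vnorm_S X (V *\<^sub>v y) > 0" using vnorm_pos[OF g x] .
  have m: "vnorm_S X (Z *\<^sub>v (V *\<^sub>v y)) / vnorm_S X (V *\<^sub>v y) \<in> rset X Z" using x by blast
  have "L \<le> vnorm_S X (Z *\<^sub>v (V *\<^sub>v y)) / vnorm_S X (V *\<^sub>v y)" using L p by (simp add: pos_le_divide_eq)
  thus ?thesis unfolding mnorm_S_def using cSup_upper[OF m b] by linarith
qed

lemma bounded:
  assumes g: "good X" and Z: "Z \<in> carrier_mat n n"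
  shows "\<exists>L. \<forall>y\<in>carrier_vec n. vnorm_S X (Z *\<^sub>v (V *\<^sub>v y)) \<le> L * vnorm_S X (V *\<^sub>v y)"
proof -
  define T where "T = W * Z * V"
  have T: "T \<in> carrier_mat n n" unfolding T_def using W Z V by auto
  define c where "c i = (\<Sum>j<n. cmod (T $$ (i,j)) / sqrt (wt X j))" for i
  define K where "K = (\<Sum>i<n. wt X i * (c i)^2)"
  have "vnorm_S X (Z *\<^sub>v (V *\<^sub>v y)) \<le> sqrt K * vnorm_S X (V *\<^sub>v y)" if y: "y \<in> carrier_vec n" for y
  proof -
    define h where "h = T *\<^sub>v y"
    have h: "h \<in> carrier_vec n" unfolding h_def using T y by simp
    have "h = W *\<^sub>v (Z *\<^sub>v (V *\<^sub>v y))" unfolding h_def T_def using W Z V y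
      by (simp add: assoc_mult_mat_vec[of _ n n _ n])
    hence Zh: "Z *\<^sub>v (V *\<^sub>v y) = V *\<^sub>v h" using VW_vec Z V y by simp
    define Q where "Q = (\<Sum>i<n. wt X i * (cmod (y$i))^2)"
    have Q0: "Q \<ge> 0" unfolding Q_def using wt_pos[OF g] by (intro sum_nonneg) (simp add: less_imp_le)
    have yb: "cmod (y$j) \<le> sqrt Q / sqrt (wt X j)" if j: "j < n" for j
    proof -
      have "wt X j * (cmod (y$j))^2 \<le> Q" unfolding Q_def
        by (rule member_le_sum[of j "{..<n}" "\<lambda>i. wt X i * (cmod (y$i))^2"])
           (use j in \<open>auto intro!: mult_nonneg_nonneg less_imp_le[OF wt_pos[OF g]]\<close>)
      hence "(cmod (y$j))^2 \<le> Q / wt X j" using wt_pos[OF g j] by (simp add: pos_le_divide_eq mult.commute)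
      hence "sqrt ((cmod (y$j))^2) \<le> sqrt (Q / wt X j)" by (rule real_sqrt_le_mono)
      thus ?thesis by (simp add: real_sqrt_divide)
    qed
    have hb: "cmod (h$i) \<le> c i * sqrt Q" if i: "i < n" for i
    proof -
      have "h$i = (\<Sum>j<n. T $$ (i,j) * y$j)" unfolding h_def using T y i
        by (simp add: mult_mat_vec_def scalar_prod_def row_def lessThan_atLeast0)
      hence "cmod (h$i) \<le> (\<Sum>j<n. cmod (T $$ (i,j)) * cmod (y$j))"
        by (metis (no_types, lifting) norm_mult norm_sum sum.cong)
      also have "\<dots> \<le> (\<Sum>j<n. cmod (T $$ (i,j)) * (sqrt Q / sqrt (wt X j)))"
        by (rule sum_mono) (use yb in \<open>auto intro!: mult_left_mono simp del: times_divide_eq_right\<close>)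
      also have "\<dots> = c i * sqrt Q" unfolding c_def by (simp add: sum_distrib_right)
      finally show ?thesis .
    qed
    have "(\<Sum>i<n. wt X i * (cmod (h$i))^2) \<le> (\<Sum>i<n. wt X i * (c i)^2 * Q)"
    proof (rule sum_mono)
      fix i assume "i \<in> {..<n}" hence i: "i < n" by simp
      have "(cmod (h$i))^2 \<le> (c i * sqrt Q)^2" using hb[OF i] by (intro power_mono) auto
      also have "\<dots> = (c i)^2 * Q" using Q0 by (simp add: power_mult_distrib)
      finally show "wt X i * (cmod (h$i))^2 \<le> wt X i * (c i)^2 * Q"
        using wt_pos[OF g i] by (simp add: mult.assoc)
    qed
    also have "\<dots> = K * Q" unfolding K_def by (simp add: sum_distrib_right)
    finally have "sqrt (\<Sum>i<n. wt X i * (cmod (h$i))^2) \<le> sqrt (K * Q)" by (rule real_sqrt_le_mono)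
    thus ?thesis unfolding Zh using vnorm_V[OF g h] vnorm_V[OF g y] Q_def by (simp add: real_sqrt_mult)
  qed
  thus ?thesis by blast
qed

end


context cs begin

definition "Mi = mat_inv M"
definition "S = 1\<^sub>m n - Mi * A"

lemma M_inv: "invertible_mat M"
proof (rule ker_inv[OF Mc])
  fix v :: "complex vec" assume v: "v \<in> carrier_vec n" and Mv: "M *\<^sub>v v = 0\<^sub>v n"
  have "qform M v = 0" unfolding qform_def Mv using v by simp
  thus "v = 0\<^sub>v n" using M v unfolding hermitian_pd_def by force
qed

lemma Mi: "Mi \<in> carrier_mat n n" "Mi * M = 1\<^sub>m n"
  using inv_props[OF Mc M_inv] unfolding Mi_def by auto

lemma S_carrier: "S \<in> carrier_mat n n" unfolding S_def using Mi Ac by auto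

lemma S_V: assumes y: "y \<in> carrier_vec n"
  shows "S *\<^sub>v (V *\<^sub>v y) = V *\<^sub>v vec n (\<lambda>i. (1 - lam i) * y$i)"
proof -
  have eig': "A * V = M * V * dgm n lam" using eig unfolding dgm_def .
  define z where "z = V *\<^sub>v vec n (\<lambda>i. lam i * y$i)"
  have z: "z \<in> carrier_vec n" unfolding z_def using V by simp
  have "A *\<^sub>v (V *\<^sub>v y) = (A * V) *\<^sub>v y" using Ac V y by simp
  also have "\<dots> = (M * V * dgm n lam) *\<^sub>v y" using eig' by simp
  also have "\<dots> = (M * V) *\<^sub>v (dgm n lam *\<^sub>v y)"
    using assoc_mult_mat_vec[of "M * V" n n "dgm n lam" n y] Mc V y by simp
  also have "\<dots> = M *\<^sub>v (V *\<^sub>v (dgm n lam *\<^sub>v y))"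
    using assoc_mult_mat_vec[OF Mc V mult_mat_vec_carrier[OF dgm_carrier y]] .
  also have "\<dots> = M *\<^sub>v z" unfolding z_def dgm_mult_vec[OF y] ..
  finally have Az: "A *\<^sub>v (V *\<^sub>v y) = M *\<^sub>v z" .
  have "Mi *\<^sub>v (A *\<^sub>v (V *\<^sub>v y)) = (Mi * M) *\<^sub>v z" unfolding Az by (rule assoc_mult_mat_vec[OF Mi(1) Mc z, symmetric])
  also have "\<dots> = z" using Mi z by simp
  finally have MAz: "Mi *\<^sub>v (A *\<^sub>v (V *\<^sub>v y)) = z" .
  have Vy: "V *\<^sub>v y \<in> carrier_vec n" using V y by simp
  have "S *\<^sub>v (V *\<^sub>v y) = V *\<^sub>v y - (Mi * A) *\<^sub>v (V *\<^sub>v y)"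
    unfolding S_def using Mi Ac Vy by (simp add: minus_mult_distrib_mat_vec[of _ n n])
  also have "(Mi * A) *\<^sub>v (V *\<^sub>v y) = z" using MAz Mi Ac Vy by simp
  also have "V *\<^sub>v y - z = V *\<^sub>v (y - vec n (\<lambda>i. lam i * y$i))"
    unfolding z_def using V y by (simp add: mult_minus_distrib_mat_vec[of _ n n])
  also have "y - vec n (\<lambda>i. lam i * y$i) = vec n (\<lambda>i. (1 - lam i) * y$i)"
    using y by (intro eq_vecI) (auto simp: algebra_simps)
  finally show ?thesis .
qed

lemma S_pow_V: "y \<in> carrier_vec n \<Longrightarrow> (S ^\<^sub>m k) *\<^sub>v (V *\<^sub>v y) = V *\<^sub>v vec n (\<lambda>i. (1 - lam i)^k * y$i)"
proof (induction k arbitrary: y)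
  case 0
  have "vec n (\<lambda>i. (1 - lam i)^0 * y$i) = y" using 0 by (intro eq_vecI) auto
  thus ?case using S_carrier V 0 by simp
next
  case (Suc k)
  have "(S ^\<^sub>m Suc k) *\<^sub>v (V *\<^sub>v y) = (S ^\<^sub>m k) *\<^sub>v (S *\<^sub>v (V *\<^sub>v y))"
    using S_carrier V Suc.prems by (simp add: assoc_mult_mat_vec[of _ n n _ n])
  also have "\<dots> = V *\<^sub>v vec n (\<lambda>i. (1 - lam i)^k * (vec n (\<lambda>i. (1 - lam i) * y$i) $ i))"
    unfolding S_V[OF Suc.prems] by (rule Suc.IH) simp
  also have "vec n (\<lambda>i. (1 - lam i)^k * (vec n (\<lambda>i. (1 - lam i) * y$i) $ i)) = vec n (\<lambda>i. (1 - lam i)^(Suc k) * y$i)"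
    by (intro eq_vecI) auto
  finally show ?case .
qed

lemma S_pow_carrier: "S ^\<^sub>m k \<in> carrier_mat n n" using S_carrier by simp

context
  fixes P assumes P: "P \<in> carrier_mat n nc" and Pinv: "invertible_mat (mat_adjoint P * A * P)"
begin

definition "C = mat_inv (mat_adjoint P * A * P)"

lemma PAP: "mat_adjoint P * A * P \<in> carrier_mat nc nc" using adj_carrier[OF P] Ac P by auto

lemma C: "C \<in> carrier_mat nc nc" "C * (mat_adjoint P * A * P) = 1\<^sub>m nc"
  using inv_props[OF PAP Pinv] unfolding C_def by auto

lemma Pi_carrier: "Pi_proj A P P \<in> carrier_mat n n"
  unfolding Pi_proj_def C_def[symmetric] using P C adj_carrier[OF P] Ac by auto

lemma Pi_vec: "u \<in> carrier_vec n \<Longrightarrow> Pi_proj A P P *\<^sub>v u = P *\<^sub>v (C *\<^sub>v (mat_adjoint P *\<^sub>v (A *\<^sub>v u)))"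
  unfolding Pi_proj_def C_def[symmetric] using P C adj_carrier[OF P] Ac
  by (simp add: assoc_mult_mat_vec[of _ n n _ n] assoc_mult_mat_vec[of _ n nc _ n] assoc_mult_mat_vec[of _ n nc _ nc]
     assoc_mult_mat_vec[of _ nc nc _ n])

lemma Pi_zero: "u \<in> carrier_vec n \<Longrightarrow> mat_adjoint P *\<^sub>v (A *\<^sub>v u) = 0\<^sub>v nc \<Longrightarrow> Pi_proj A P P *\<^sub>v u = 0\<^sub>v n"
proof -
  assume u: "u \<in> carrier_vec n" and z: "mat_adjoint P *\<^sub>v (A *\<^sub>v u) = 0\<^sub>v nc"
  have "C *\<^sub>v 0\<^sub>v nc = 0\<^sub>v nc" using C by (intro eq_vecI) auto
  moreover have "P *\<^sub>v 0\<^sub>v nc = 0\<^sub>v n" using P by (intro eq_vecI) auto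
  ultimately show ?thesis using Pi_vec[OF u] z by simp
qed

lemma Pi_fix: "w \<in> carrier_vec nc \<Longrightarrow> Pi_proj A P P *\<^sub>v (P *\<^sub>v w) = P *\<^sub>v w"
proof -
  assume w: "w \<in> carrier_vec nc"
  have "mat_adjoint P *\<^sub>v (A *\<^sub>v (P *\<^sub>v w)) = (mat_adjoint P * A * P) *\<^sub>v w"
    using adj_carrier[OF P] Ac P w by (simp add: assoc_mult_mat_vec[of _ nc n _ n] assoc_mult_mat_vec[of _ n n _ nc]
      assoc_mult_mat_vec[of _ nc n _ nc])
  hence "C *\<^sub>v (mat_adjoint P *\<^sub>v (A *\<^sub>v (P *\<^sub>v w))) = (C * (mat_adjoint P * A * P)) *\<^sub>v w"
    using assoc_mult_mat_vec[OF C(1) PAP w] by simp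
  also have "\<dots> = w" using C w by simp
  finally show ?thesis using Pi_vec[of "P *\<^sub>v w"] P w by simp
qed

lemma E_carrier: "E_TG n A M nu1 nu2 P P \<in> carrier_mat n n"
  unfolding E_TG_def Mi_def[symmetric] S_def[symmetric] using S_carrier Pi_carrier by auto

lemma E_vec: assumes x: "x \<in> carrier_vec n"
  shows "E_TG n A M nu1 nu2 P P *\<^sub>v x =
    S ^\<^sub>m nu2 *\<^sub>v ((S ^\<^sub>m nu1 *\<^sub>v x) - Pi_proj A P P *\<^sub>v (S ^\<^sub>m nu1 *\<^sub>v x))"
proof -
  have a: "S ^\<^sub>m nu1 *\<^sub>v x \<in> carrier_vec n" by (rule mult_mat_vec_carrier[OF S_pow_carrier x])
  have "E_TG n A M nu1 nu2 P P *\<^sub>v x = S ^\<^sub>m nu2 *\<^sub>v ((1\<^sub>m n - Pi_proj A P P) *\<^sub>v (S ^\<^sub>m nu1 *\<^sub>v x))"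
  proof -
    have B: "1\<^sub>m n - Pi_proj A P P \<in> carrier_mat n n" using Pi_carrier by (rule minus_carrier_mat)
    have "S ^\<^sub>m nu2 * (1\<^sub>m n - Pi_proj A P P) * S ^\<^sub>m nu1 *\<^sub>v x
       = (S ^\<^sub>m nu2 * (1\<^sub>m n - Pi_proj A P P)) *\<^sub>v (S ^\<^sub>m nu1 *\<^sub>v x)"
      using assoc_mult_mat_vec[OF mult_carrier_mat[OF S_pow_carrier B] S_pow_carrier x] .
    also have "\<dots> = S ^\<^sub>m nu2 *\<^sub>v ((1\<^sub>m n - Pi_proj A P P) *\<^sub>v (S ^\<^sub>m nu1 *\<^sub>v x))"
      using assoc_mult_mat_vec[OF S_pow_carrier B a] .
    finally show ?thesis unfolding E_TG_def Mi_def[symmetric] S_def[symmetric] .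
  qed
  also have "(1\<^sub>m n - Pi_proj A P P) *\<^sub>v (S ^\<^sub>m nu1 *\<^sub>v x) = (S ^\<^sub>m nu1 *\<^sub>v x) - Pi_proj A P P *\<^sub>v (S ^\<^sub>m nu1 *\<^sub>v x)"
    using minus_mult_distrib_mat_vec[OF one_carrier_mat Pi_carrier a] a by simp
  finally show ?thesis .
qed

end

end


lemma assoc3:
  fixes P' :: "complex mat"
  assumes P': "P' \<in> carrier_mat k n" and A: "A \<in> carrier_mat n n" and X: "X \<in> carrier_mat n m" and w: "w \<in> carrier_vec m"
  shows "(P' * A * X) *\<^sub>v w = P' *\<^sub>v (A *\<^sub>v (X *\<^sub>v w))"
  using assoc_mult_mat_vec[OF mult_carrier_mat[OF P' A] X w] assoc_mult_mat_vec[OF P' A mult_mat_vec_carrier[OF X w]]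
  by simp

context cs begin

context
  fixes Psh assumes Psh: "Psh \<in> carrier_mat n nc"
    and range: "{Psh *\<^sub>v y | y. y \<in> carrier_vec nc} =
                {V *\<^sub>v z | z. z \<in> carrier_vec n \<and> (\<forall>i. nc \<le> i \<and> i < n \<longrightarrow> z $ i = 0)}"
begin

lemma range_in: "a \<in> carrier_vec n \<Longrightarrow> (\<And>i. nc \<le> i \<Longrightarrow> i < n \<Longrightarrow> a $ i = 0) \<Longrightarrow> \<exists>w\<in>carrier_vec nc. Psh *\<^sub>v w = V *\<^sub>v a"
proof -
  assume "a \<in> carrier_vec n" "\<And>i. nc \<le> i \<Longrightarrow> i < n \<Longrightarrow> a $ i = 0"
  hence "V *\<^sub>v a \<in> {V *\<^sub>v z | z. z \<in> carrier_vec n \<and> (\<forall>i. nc \<le> i \<and> i < n \<longrightarrow> z $ i = 0)}" by blast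
  thus ?thesis unfolding range[symmetric] by auto
qed

lemma range_out: "w \<in> carrier_vec nc \<Longrightarrow> \<exists>a\<in>carrier_vec n. (\<forall>i. nc \<le> i \<and> i < n \<longrightarrow> a $ i = 0) \<and> Psh *\<^sub>v w = V *\<^sub>v a"
proof -
  assume "w \<in> carrier_vec nc"
  hence "Psh *\<^sub>v w \<in> {Psh *\<^sub>v y | y. y \<in> carrier_vec nc}" by blast
  thus ?thesis unfolding range by auto
qed

definition "zf j = (SOME z. z \<in> carrier_vec nc \<and> Psh *\<^sub>v z = V *\<^sub>v unit_vec n j)"

lemma zf: assumes j: "j < nc" shows "zf j \<in> carrier_vec nc" "Psh *\<^sub>v zf j = V *\<^sub>v unit_vec n j"
proof -
  have "\<exists>z. z \<in> carrier_vec nc \<and> Psh *\<^sub>v z = V *\<^sub>v unit_vec n j"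
    using range_in[of "unit_vec n j"] j by auto
  hence "zf j \<in> carrier_vec nc \<and> Psh *\<^sub>v zf j = V *\<^sub>v unit_vec n j"
    unfolding zf_def by (rule someI_ex)
  thus "zf j \<in> carrier_vec nc" "Psh *\<^sub>v zf j = V *\<^sub>v unit_vec n j" by auto
qed

definition "Zm = mat nc nc (\<lambda>(i,j). zf j $ i)"
definition "Rm = mat nc n (\<lambda>(i,j). W $$ (i,j))"

lemma Zm: "Zm \<in> carrier_mat nc nc" unfolding Zm_def by auto
lemma Rm: "Rm \<in> carrier_mat nc n" unfolding Rm_def by auto

lemma RPZ: "(Rm * Psh) * Zm = 1\<^sub>m nc"
proof (rule eq_matI)
  fix i j assume i: "i < dim_row (1\<^sub>m nc)" and j: "j < dim_col (1\<^sub>m nc)"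
  hence i: "i < nc" and j: "j < nc" by auto
  have colZ: "col Zm j = zf j" using zf[OF j] j unfolding Zm_def by (intro eq_vecI) auto
  have "((Rm * Psh) * Zm) $$ (i,j) = row (Rm * Psh) i \<bullet> col Zm j"
    by (rule index_mult_mat(1)) (use i j Rm Psh Zm in auto)
  also have "\<dots> = ((Rm * Psh) *\<^sub>v zf j) $ i" using i Rm colZ by simp
  also have "(Rm * Psh) *\<^sub>v zf j = Rm *\<^sub>v (V *\<^sub>v unit_vec n j)"
    using assoc_mult_mat_vec[OF Rm Psh zf(1)[OF j]] zf(2)[OF j] by simp
  also have "(Rm *\<^sub>v (V *\<^sub>v unit_vec n j)) $ i = (W *\<^sub>v (V *\<^sub>v unit_vec n j)) $ i"
  proof -
    have "row Rm i = row W i" using i nc W unfolding Rm_def by (intro eq_vecI) auto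
    thus ?thesis using i nc Rm W by simp
  qed
  also have "\<dots> = unit_vec n j $ i" using WV_vec by simp
  also have "\<dots> = 1\<^sub>m nc $$ (i,j)" using i j nc by simp
  finally show "((Rm * Psh) * Zm) $$ (i,j) = 1\<^sub>m nc $$ (i,j)" .
qed (use Rm Psh Zm in auto)

lemma Psh_inj: assumes u: "u \<in> carrier_vec nc" and z: "Psh *\<^sub>v u = 0\<^sub>v n" shows "u = 0\<^sub>v nc"
proof -
  have RP: "Rm * Psh \<in> carrier_mat nc nc" using Rm Psh by simp
  have ZRP: "Zm * (Rm * Psh) = 1\<^sub>m nc" using mat_mult_left_right_inverse[OF RP Zm RPZ] .
  have "u = (Zm * (Rm * Psh)) *\<^sub>v u" unfolding ZRP using u by simp
  also have "\<dots> = Zm *\<^sub>v (Rm *\<^sub>v (Psh *\<^sub>v u))"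
    using assoc_mult_mat_vec[OF Zm RP u] assoc_mult_mat_vec[OF Rm Psh u] by simp
  also have "Rm *\<^sub>v (Psh *\<^sub>v u) = 0\<^sub>v nc" unfolding z using Rm by (intro eq_vecI) auto
  also have "Zm *\<^sub>v 0\<^sub>v nc = 0\<^sub>v nc" using Zm by (intro eq_vecI) auto
  finally show ?thesis .
qed

lemma Psh_inv: "invertible_mat (mat_adjoint Psh * A * Psh)"
proof (rule ker_inv)
  show PAP: "mat_adjoint Psh * A * Psh \<in> carrier_mat nc nc" using adj_carrier[OF Psh] Ac Psh by auto
  fix v :: "complex vec" assume v: "v \<in> carrier_vec nc" and z: "(mat_adjoint Psh * A * Psh) *\<^sub>v v = 0\<^sub>v nc"
  have Pv: "Psh *\<^sub>v v \<in> carrier_vec n" using Psh v by simp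
  have "qform A (Psh *\<^sub>v v) = conjugate v \<bullet> (mat_adjoint Psh *\<^sub>v (A *\<^sub>v (Psh *\<^sub>v v)))"
    unfolding qform_def using adj_sprod[OF Psh v, of "A *\<^sub>v (Psh *\<^sub>v v)"] Ac Pv by simp
  also have "mat_adjoint Psh *\<^sub>v (A *\<^sub>v (Psh *\<^sub>v v)) = 0\<^sub>v nc"
    using assoc3[OF adj_carrier[OF Psh] Ac Psh v] z by simp
  finally have "qform A (Psh *\<^sub>v v) = 0" using v by simp
  hence "Psh *\<^sub>v v = 0\<^sub>v n" using A Pv unfolding hermitian_pd_def by force
  thus "v = 0\<^sub>v nc" using Psh_inj[OF v] by simp
qed

end
end


context cs begin

context
  fixes Psh assumes Psh: "Psh \<in> carrier_mat n nc"
    and range: "{Psh *\<^sub>v y | y. y \<in> carrier_vec nc} =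
                {V *\<^sub>v z | z. z \<in> carrier_vec n \<and> (\<forall>i. nc \<le> i \<and> i < n \<longrightarrow> z $ i = 0)}"
begin

lemma Esh_V: assumes y: "y \<in> carrier_vec n"
  shows "E_TG n A M nu1 nu2 Psh Psh *\<^sub>v (V *\<^sub>v y) =
     V *\<^sub>v vec n (\<lambda>i. if i < nc then 0 else (1 - lam i)^(nu1+nu2) * y$i)"
proof -
  note Pinv = Psh_inv[OF Psh range]
  define g1 where "g1 = vec n (\<lambda>i. (1 - lam i)^nu1 * y$i)"
  define a where "a = vec n (\<lambda>i. if i < nc then g1$i else 0)"
  define b where "b = vec n (\<lambda>i. if i < nc then 0 else g1$i)"
  have g1: "g1 \<in> carrier_vec n" and a: "a \<in> carrier_vec n" and b: "b \<in> carrier_vec n"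
    unfolding g1_def a_def b_def by auto
  have Va: "V *\<^sub>v a \<in> carrier_vec n" and Vb: "V *\<^sub>v b \<in> carrier_vec n" using V a b by auto
  have Sg: "S ^\<^sub>m nu1 *\<^sub>v (V *\<^sub>v y) = V *\<^sub>v g1" unfolding g1_def using S_pow_V[OF y] .
  have "g1 = a + b" unfolding a_def b_def using g1 by (intro eq_vecI) auto
  hence Vg: "V *\<^sub>v g1 = V *\<^sub>v a + V *\<^sub>v b" using mult_add_distrib_mat_vec[OF V a b] by simp
  obtain w where w: "w \<in> carrier_vec nc" "Psh *\<^sub>v w = V *\<^sub>v a"
    using range_in[OF Psh range a] unfolding a_def by auto
  have PiA: "Pi_proj A Psh Psh *\<^sub>v (V *\<^sub>v a) = V *\<^sub>v a"
    using Pi_fix[OF Psh Pinv w(1)] w(2) by simp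
  define u where "u = mat_adjoint Psh *\<^sub>v (A *\<^sub>v (V *\<^sub>v b))"
  have u: "u \<in> carrier_vec nc" unfolding u_def using adj_carrier[OF Psh] Ac Vb by simp
  obtain a' where a': "a' \<in> carrier_vec n" "\<And>i. nc \<le> i \<Longrightarrow> i < n \<Longrightarrow> a' $ i = 0" "Psh *\<^sub>v u = V *\<^sub>v a'"
    using range_out[OF Psh range u] by auto
  have "conjugate u \<bullet> u = conjugate (Psh *\<^sub>v u) \<bullet> (A *\<^sub>v (V *\<^sub>v b))"
    unfolding u_def using adj_sprod[OF Psh u, of "A *\<^sub>v (V *\<^sub>v b)"] Ac Vb u_def by simp
  also have "\<dots> = (\<Sum>i<n. cnj (a'$i) * ((mat_adjoint V * A * V) $$ (i,i) * b$i))"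
    unfolding a'(3) using form_V[OF Ac diagA a'(1) b] .
  also have "\<dots> = 0" by (rule sum.neutral) (auto simp: b_def a'(2))
  finally have "u = 0\<^sub>v nc" using sprod_self_zero[OF u] by simp
  hence PiB: "Pi_proj A Psh Psh *\<^sub>v (V *\<^sub>v b) = 0\<^sub>v n"
    using Pi_zero[OF Psh Pinv Vb] unfolding u_def by simp
  have "Pi_proj A Psh Psh *\<^sub>v (V *\<^sub>v g1) = V *\<^sub>v a + 0\<^sub>v n"
    unfolding Vg mult_add_distrib_mat_vec[OF Pi_carrier[OF Psh Pinv] Va Vb] PiA PiB ..
  hence diff: "V *\<^sub>v g1 - Pi_proj A Psh Psh *\<^sub>v (V *\<^sub>v g1) = V *\<^sub>v b"
    unfolding Vg using Va Vb by (intro eq_vecI) auto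
  have "E_TG n A M nu1 nu2 Psh Psh *\<^sub>v (V *\<^sub>v y) = S ^\<^sub>m nu2 *\<^sub>v (V *\<^sub>v b)"
    unfolding E_vec[OF Psh Pinv mult_mat_vec_carrier[OF V y]] Sg diff ..
  also have "\<dots> = V *\<^sub>v vec n (\<lambda>i. (1 - lam i)^nu2 * b$i)" using S_pow_V[OF b] .
  also have "vec n (\<lambda>i. (1 - lam i)^nu2 * b$i) = vec n (\<lambda>i. if i < nc then 0 else (1 - lam i)^(nu1+nu2) * y$i)"
    unfolding b_def g1_def by (intro eq_vecI) (auto simp: power_add)
  finally show ?thesis .
qed

end
end


context cs begin

lemma vnorm_nonneg: assumes g: "good X" and x: "x \<in> carrier_vec n" shows "vnorm_S X x \<ge> 0"
proof -
  have "vnorm_S X x = vnorm_S X (V *\<^sub>v (W *\<^sub>v x))" using VW_vec[OF x] by simp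
  also have "\<dots> = sqrt (\<Sum>i<n. wt X i * (cmod ((W *\<^sub>v x)$i))^2)" using vnorm_V[OF g] W x by simp
  also have "\<dots> \<ge> 0" using wt_pos[OF g] by (intro real_sqrt_ge_zero sum_nonneg) (simp add: less_imp_le)
  finally show ?thesis .
qed

lemma bdd_gen: assumes g: "good X" and Z: "Z \<in> carrier_mat n n" shows "bdd_above (rset X Z)"
proof -
  obtain L where "\<forall>y\<in>carrier_vec n. vnorm_S X (Z *\<^sub>v (V *\<^sub>v y)) \<le> L * vnorm_S X (V *\<^sub>v y)"
    using bounded[OF g Z] by blast
  thus ?thesis by (rule mnorm_le(2)[OF g])
qed

lemma mnorm_nonneg: assumes g: "good X" and Z: "Z \<in> carrier_mat n n" shows "0 \<le> mnorm_S n X Z"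
  by (rule mnorm_ge[OF g bdd_gen[OF g Z] unit0]) (use vnorm_nonneg[OF g] V Z in simp)

abbreviation "cc \<equiv> cmod (1 - lam nc)"

context
  fixes Psh assumes Psh: "Psh \<in> carrier_mat n nc"
    and range: "{Psh *\<^sub>v y | y. y \<in> carrier_vec nc} =
                {V *\<^sub>v z | z. z \<in> carrier_vec n \<and> (\<forall>i. nc \<le> i \<and> i < n \<longrightarrow> z $ i = 0)}"
begin

lemma Esh_le: assumes g: "good X"
  shows "mnorm_S n X (E_TG n A M nu1 nu2 Psh Psh) \<le> (if nc < n then cc^(nu1+nu2) else 0)"
    "bdd_above (rset X (E_TG n A M nu1 nu2 Psh Psh))"
proof -
  let ?L = "if nc < n then cc^(nu1+nu2) else 0"
  have "\<forall>y\<in>carrier_vec n. vnorm_S X (E_TG n A M nu1 nu2 Psh Psh *\<^sub>v (V *\<^sub>v y)) \<le> ?L * vnorm_S X (V *\<^sub>v y)"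
  proof
    fix y :: "complex vec" assume y: "y \<in> carrier_vec n"
    show "vnorm_S X (E_TG n A M nu1 nu2 Psh Psh *\<^sub>v (V *\<^sub>v y)) \<le> ?L * vnorm_S X (V *\<^sub>v y)"
      unfolding Esh_V[OF Psh range y]
    proof (rule vnorm_cmp_le[OF g y])
      fix i assume i: "i < n"
      show "cmod (vec n (\<lambda>i. if i < nc then 0 else (1 - lam i)^(nu1+nu2) * y$i) $ i) \<le> ?L * cmod (y$i)"
      proof (cases "i < nc")
        case False
        hence "nc < n" using i by simp
        have "cmod (1 - lam i) ^ (nu1+nu2) \<le> cc ^ (nu1+nu2)"
          using order[of nc i] False i by (intro power_mono) auto
        thus ?thesis using False i \<open>nc < n\<close> by (simp add: norm_mult norm_power mult_right_mono)
      qed (use i in auto)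
    qed auto
  qed
  from mnorm_le[OF g this] show "mnorm_S n X (E_TG n A M nu1 nu2 Psh Psh) \<le> ?L"
    "bdd_above (rset X (E_TG n A M nu1 nu2 Psh Psh))" by auto
qed

lemma Esh_ge: assumes g: "good X" and lt: "nc < n"
  shows "cc^(nu1+nu2) \<le> mnorm_S n X (E_TG n A M nu1 nu2 Psh Psh)"
proof (rule mnorm_ge[OF g Esh_le(2)[OF g]])
  let ?y = "unit_vec n nc :: complex vec"
  show y: "?y \<in> carrier_vec n" by simp
  show "?y \<noteq> 0\<^sub>v n"
  proof
    assume "?y = 0\<^sub>v n"
    hence "?y $ nc = 0\<^sub>v n $ nc" by (simp only:)
    thus False using lt by simp
  qed
  show "cc^(nu1+nu2) * vnorm_S X (V *\<^sub>v ?y) \<le> vnorm_S X (E_TG n A M nu1 nu2 Psh Psh *\<^sub>v (V *\<^sub>v ?y))"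
    unfolding Esh_V[OF Psh range y]
    by (rule vnorm_cmp_ge[OF g y]) (use lt in \<open>auto simp: norm_mult norm_power\<close>)
qed

end

lemma EP_ge: assumes g: "good X" and P: "P \<in> carrier_mat n nc" and Pinv: "invertible_mat (mat_adjoint P * A * P)"
  and lt: "nc < n"
  shows "cc^(nu1+nu2) \<le> mnorm_S n X (E_TG n A M nu1 nu2 P P)"
proof (cases "cc^(nu1+nu2) = 0")
  case True
  show ?thesis by (subst True) (rule mnorm_nonneg[OF g E_carrier[OF P Pinv]])
next
  case False
  have nz: "(1 - lam i)^nu1 \<noteq> 0" if i: "i \<le> nc" for i
  proof (cases "nu1 = 0")
    case False
    hence "cc \<noteq> 0" using \<open>cc^(nu1+nu2) \<noteq> 0\<close> by auto
    moreover have "cc \<le> cmod (1 - lam i)" using order[OF i lt] .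
    ultimately have "cmod (1 - lam i) \<noteq> 0" by auto
    thus ?thesis by simp
  qed simp
  define B where "B = mat_adjoint P * A * V"
  have B: "B \<in> carrier_mat nc n" unfolding B_def using adj_carrier[OF P] Ac V by auto
  define K where "K = mat (Suc nc) (Suc nc) (\<lambda>(i,j). if i = nc then 0 else B $$ (i,j))"
  have Kc: "K \<in> carrier_mat (Suc nc) (Suc nc)" unfolding K_def by auto
  have "K = mat\<^sub>r (Suc nc) (Suc nc) (\<lambda>i. if i = nc then 0\<^sub>v (Suc nc) else vec (Suc nc) (\<lambda>j. B $$ (i,j)))"
    unfolding K_def by (intro eq_matI) auto
  hence "det K = 0" using det_row_0[of nc "Suc nc" "\<lambda>i. vec (Suc nc) (\<lambda>j. B $$ (i,j))"] by auto
  then obtain v where v: "v \<in> carrier_vec (Suc nc)" "v \<noteq> 0\<^sub>v (Suc nc)" "K *\<^sub>v v = 0\<^sub>v (Suc nc)"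
    using det_0_iff_vec_prod_zero[OF Kc] by auto
  define w where "w = vec n (\<lambda>i. if i \<le> nc then v$i else 0)"
  have w: "w \<in> carrier_vec n" unfolding w_def by simp
  have Bw: "B *\<^sub>v w = 0\<^sub>v nc"
  proof (rule eq_vecI)
    fix i assume "i < dim_vec (0\<^sub>v nc :: complex vec)"
    hence i: "i < nc" by simp
    have "(B *\<^sub>v w) $ i = (\<Sum>j\<in>{0..<n}. B $$ (i,j) * w $ j)"
      using B w i by (simp add: scalar_prod_def row_def)
    also have "\<dots> = (\<Sum>j\<in>{0..<Suc nc}. K $$ (i,j) * v $ j)"
      by (rule sum.mono_neutral_cong_right) (use lt i in \<open>auto simp: w_def K_def\<close>)
    also have "\<dots> = (K *\<^sub>v v) $ i" using Kc v(1) i by (simp add: scalar_prod_def row_def)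
    also have "\<dots> = 0\<^sub>v (Suc nc) $ i" by (simp only: v(3))
    also have "\<dots> = 0" using i by simp
    finally show "(B *\<^sub>v w) $ i = 0\<^sub>v nc $ i" using i by simp
  qed (use B in simp)
  obtain j where j: "j < Suc nc" "v $ j \<noteq> 0"
  proof -
    have "\<exists>j<Suc nc. v $ j \<noteq> 0"
    proof (rule ccontr)
      assume "\<not> ?thesis"
      hence "v = 0\<^sub>v (Suc nc)" using v(1) by (intro eq_vecI) auto
      thus False using v(2) by simp
    qed
    thus ?thesis using that by blast
  qed
  have wj: "w $ j \<noteq> 0" using j lt unfolding w_def by auto
  define y where "y = vec n (\<lambda>i. if i \<le> nc then w$i / (1 - lam i)^nu1 else 0)"
  have y: "y \<in> carrier_vec n" unfolding y_def by simp
  have yj: "y $ j \<noteq> 0" using j lt wj nz[of j] unfolding y_def by auto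
  have ynz: "y \<noteq> 0\<^sub>v n"
  proof
    assume "y = 0\<^sub>v n"
    hence "y $ j = 0\<^sub>v n $ j" by (simp only:)
    thus False using yj j lt by simp
  qed
  have Sy: "S ^\<^sub>m nu1 *\<^sub>v (V *\<^sub>v y) = V *\<^sub>v w"
  proof -
    have "vec n (\<lambda>i. (1 - lam i)^nu1 * y$i) = w"
      unfolding y_def w_def using nz by (intro eq_vecI) auto
    thus ?thesis using S_pow_V[OF y] by simp
  qed
  have Vw: "V *\<^sub>v w \<in> carrier_vec n" using V w by simp
  have "mat_adjoint P *\<^sub>v (A *\<^sub>v (V *\<^sub>v w)) = B *\<^sub>v w"
    unfolding B_def using assoc3[OF adj_carrier[OF P] Ac V w] by simp
  hence PiW: "Pi_proj A P P *\<^sub>v (V *\<^sub>v w) = 0\<^sub>v n" using Pi_zero[OF P Pinv Vw] Bw by simp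
  have "V *\<^sub>v w - 0\<^sub>v n = V *\<^sub>v w" using Vw by simp
  hence EV: "E_TG n A M nu1 nu2 P P *\<^sub>v (V *\<^sub>v y) = V *\<^sub>v vec n (\<lambda>i. (1 - lam i)^nu2 * w$i)"
    unfolding E_vec[OF P Pinv mult_mat_vec_carrier[OF V y]] Sy PiW using S_pow_V[OF w] by simp
  show ?thesis
  proof (rule mnorm_ge[OF g bdd_gen[OF g E_carrier[OF P Pinv]] y ynz])
    show "cc^(nu1+nu2) * vnorm_S X (V *\<^sub>v y) \<le> vnorm_S X (E_TG n A M nu1 nu2 P P *\<^sub>v (V *\<^sub>v y))"
      unfolding EV
    proof (rule vnorm_cmp_ge[OF g y])
      fix i assume i: "i < n"
      show "cc^(nu1+nu2) * cmod (y$i) \<le> cmod (vec n (\<lambda>i. (1 - lam i)^nu2 * w$i) $ i)"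
      proof (cases "i \<le> nc")
        case True
        define t where "t = cmod (1 - lam i)"
        have ct: "cc \<le> t" unfolding t_def using order[OF True lt] .
        have tp: "t^nu1 > 0" using nz[OF True] unfolding t_def by (simp add: norm_power[symmetric])
        have "cc^(nu1+nu2) * cmod (w$i) \<le> t^(nu1+nu2) * cmod (w$i)"
          using ct by (intro mult_right_mono power_mono) auto
        also have "\<dots> = t^nu1 * (t^nu2 * cmod (w$i))" by (simp add: power_add)
        finally have "cc^(nu1+nu2) * cmod (w$i) / t^nu1 \<le> t^nu2 * cmod (w$i)"
          using tp by (simp add: pos_divide_le_eq mult.commute)
        moreover have "cmod (y$i) = cmod (w$i) / t^nu1" using True i unfolding y_def t_def
          by (simp add: norm_divide norm_power)
        moreover have "cmod (vec n (\<lambda>i. (1 - lam i)^nu2 * w$i) $ i) = t^nu2 * cmod (w$i)"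
          using i unfolding t_def by (simp add: norm_mult norm_power)
        ultimately show ?thesis by simp
      next
        case False
        thus ?thesis using i unfolding y_def by simp
      qed
    qed (use w in auto)
  qed
qed

end
theorem corollary3p6:
  fixes n nc :: nat and A M Vr Psh :: "complex mat" and lam :: "nat \<Rightarrow> complex"
  assumes A: "hermitian_pd n A" and M: "hermitian_pd n M"
    and Vr: "Vr \<in> carrier_mat n n" "invertible_mat Vr"
    and eig: "A * Vr = M * Vr * mat n n (\<lambda>(i, j). if i = j then lam i else 0)"
    and diagA: "diagonal_mat (mat_adjoint Vr * A * Vr)"
    and diagM: "diagonal_mat (mat_adjoint Vr * M * Vr)"
    and order: "\<And>i j. i \<le> j \<Longrightarrow> j < n \<Longrightarrow> cmod (1 - lam j) \<le> cmod (1 - lam i)"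
    and nc: "1 \<le> nc" "nc \<le> n"
    and Psh: "Psh \<in> carrier_mat n nc"
    and range: "{Psh *\<^sub>v y | y. y \<in> carrier_vec nc} =
                {Vr *\<^sub>v z | z. z \<in> carrier_vec n \<and> (\<forall>i. nc \<le> i \<and> i < n \<longrightarrow> z $ i = 0)}"
  shows "\<forall>nu1 nu2 :: nat.
     invertible_mat (mat_adjoint Psh * A * Psh) \<and>
     (\<forall>P \<in> carrier_mat n nc. invertible_mat (mat_adjoint P * A * P) \<longrightarrow>
        mnorm_S n A (E_TG n A M nu1 nu2 Psh Psh) \<le> mnorm_S n A (E_TG n A M nu1 nu2 P P)) \<and>
     (\<forall>P \<in> carrier_mat n nc. invertible_mat (mat_adjoint P * A * P) \<longrightarrow>
        mnorm_S n M (E_TG n A M nu1 nu2 Psh Psh) \<le> mnorm_S n M (E_TG n A M nu1 nu2 P P)) \<and>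
     (nc < n \<longrightarrow>
        mnorm_S n A (E_TG n A M nu1 nu2 Psh Psh) = cmod (1 - lam nc) ^ (nu1 + nu2) \<and>
        mnorm_S n M (E_TG n A M nu1 nu2 Psh Psh) = cmod (1 - lam nc) ^ (nu1 + nu2))"
  proof -
  interpret cs n nc A M Vr lam
    using A M Vr eig diagA diagM order nc by unfold_locales auto
  have key: "mnorm_S n X (E_TG n A M nu1 nu2 Psh Psh) \<le> mnorm_S n X (E_TG n A M nu1 nu2 P P)"
    if g: "good X" and P: "P \<in> carrier_mat n nc" and Pinv: "invertible_mat (mat_adjoint P * A * P)" for X nu1 nu2 P
  proof -
    have "mnorm_S n X (E_TG n A M nu1 nu2 Psh Psh) \<le> (if nc < n then cc^(nu1+nu2) else 0)"
      by (rule Esh_le(1)[OF Psh range g])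
    also have "\<dots> \<le> mnorm_S n X (E_TG n A M nu1 nu2 P P)"
    proof (cases "nc < n")
      case True
      thus ?thesis using EP_ge[OF g P Pinv True] by simp
    next
      case False
      thus ?thesis using mnorm_nonneg[OF g E_carrier[OF P Pinv]] by simp
    qed
    finally show ?thesis .
  qed
  have eq: "mnorm_S n X (E_TG n A M nu1 nu2 Psh Psh) = cc^(nu1+nu2)"
    if g: "good X" and lt: "nc < n" for X nu1 nu2
    using Esh_le(1)[OF Psh range g, of nu1 nu2] Esh_ge[OF Psh range g lt, of nu1 nu2] lt by simp
  show ?thesis using key[OF goodA] key[OF goodM] eq[OF goodA] eq[OF goodM] Psh_inv[OF Psh range] by blast
qed

end
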